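(* Let $k\ge 1$. Suppose $k$ symbols $\circ$ and $k+2$ symbols $\bullet$ are placed at $2k+2$ pairwise distinct points of a circle in such a way that between any two adjacent $\circ$'s there are at most two $\bullet$'s. Then, reading the symbols around the circle in counterclockwise cyclic order, there exist consecutive symbols forming the pattern $$\bullet\,\bullet\,\underbrace{\circ\,\bullet\,\circ\,\bullet\cdots\circ\,\bullet}_{(\circ\,\bullet)^n}\,\bullet$$ for some $n\ge 1$.
   Context: Two $\circ$'s are called adjacent if, traversing the circle from one to the other in counterclockwise direction, no other $\circ$ is encountered; the condition bounds the number of $\bullet$'s encountered on each such arc. *)

theory Defs
  imports Main
begin

datatype symbol = Circ | Bullet

text \<open>An arrangement of N symbols on a circle: positions 0..N-1 in counterclockwise
order, given by a function c (only values below N matter); position p is read as c (p mod N).\<close>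

text \<open>Two circle positions i and (i+d) mod N holding Circ are adjacent if going counterclockwise
from i by d steps (1 \<le> d \<le> N) no other Circ is met; the condition says the number d-1
of Bullets met on such an arc is at most two.  (d = N covers the case of a single Circ,
which is adjacent to itself.)\<close>
definition adjacent_circs_ok :: "nat \<Rightarrow> (nat \<Rightarrow> symbol) \<Rightarrow> bool" where
  "adjacent_circs_ok N c \<longleftrightarrow>
     (\<forall>i<N. \<forall>d. c i = Circ \<and> 1 \<le> d \<and> d \<le> N \<and> c ((i + d) mod N) = Circ
        \<and> (\<forall>j. 0 < j \<and> j < d \<longrightarrow> c ((i + j) mod N) = Bullet)
        \<longrightarrow> d - 1 \<le> 2)"

definition pattern :: "nat \<Rightarrow> symbol list" where
  "pattern n = [Bullet, Bullet] @ concat (replicate n [Circ, Bullet]) @ [Bullet]"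

definition occurs_cyclically :: "nat \<Rightarrow> (nat \<Rightarrow> symbol) \<Rightarrow> symbol list \<Rightarrow> bool" where
  "occurs_cyclically N c w \<longleftrightarrow>
     length w \<le> N \<and> (\<exists>s<N. \<forall>j<length w. c ((s + j) mod N) = w ! j)"

end

theory Submission
  imports Defs
begin

lemma modcancel: "((a::nat) + m) mod N = (b + m) mod N \<Longrightarrow> a mod N = b mod N"
  by (simp add: nat_mod_eq_iff)

lemma concat_rep_len: "length (concat (replicate n [Circ, Bullet])) = 2*n"
  by (induction n) auto

lemma concat_rep_nth:
  "j < 2*n \<Longrightarrow> concat (replicate n [Circ, Bullet]) ! j = (if even j then Circ else Bullet)"
proof (induction n arbitrary: j)
  case 0 then show ?case by simp
next
  case (Suc n)
  have e: "concat (replicate (Suc n) [Circ, Bullet]) = [Circ, Bullet] @ concat (replicate n [Circ, Bullet])" by simp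
  show ?case
  proof (cases "j < 2")
    case True
    then have "j = 0 \<or> j = 1" by auto
    then show ?thesis unfolding e by auto
  next
    case False
    then obtain j' where j': "j = j' + 2" by (metis add.commute le_Suc_ex not_less)
    then have "j' < 2*n" using Suc.prems by auto
    with Suc.IH[of j'] j' show ?thesis unfolding e by (auto simp: nth_append)
  qed
qed

lemma length_pattern: "length (pattern n) = 2*n+3"
  by (simp add: pattern_def concat_rep_len)

lemma pattern_nth: "j < 2*n+3 \<Longrightarrow> pattern n ! j =
   (if j < 2 then Bullet else if j < 2*n+2 then (if even j then Circ else Bullet) else Bullet)"
proof -
  assume j: "j < 2*n+3"
  have p: "pattern n = [Bullet, Bullet] @ (concat (replicate n [Circ, Bullet]) @ [Bullet])"
    by (simp add: pattern_def)
  show ?thesis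
  proof (cases "j < 2")
    case True
    then have "j = 0 \<or> j = 1" by auto
    then show ?thesis unfolding p by auto
  next
    case False
    then obtain j' where j': "j = j' + 2" by (metis add.commute le_Suc_ex not_less)
    have "pattern n ! j = (concat (replicate n [Circ, Bullet]) @ [Bullet]) ! j'"
      unfolding p j' by (simp add: nth_append)
    also have "\<dots> = (if j' < 2*n then (if even j' then Circ else Bullet) else Bullet)"
      using j j' by (auto simp: nth_append concat_rep_len concat_rep_nth)
    finally show ?thesis using False j j' by auto
  qed
qed

lemma next_circ:
  assumes ok: "adjacent_circs_ok N c" and N: "N > 0" and ci: "c (x mod N) = Circ"
  shows "\<exists>d. 1 \<le> d \<and> d \<le> 3 \<and> c ((x + d) mod N) = Circ"
proof -
  define i where "i = x mod N"
  have iN: "i < N" using N by (simp add: i_def)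
  have ci': "c i = Circ" using ci by (simp add: i_def)
  have exN: "1 \<le> N \<and> c ((i + N) mod N) = Circ" using N ci' iN by auto
  then have ex: "\<exists>d. 1 \<le> d \<and> c ((i + d) mod N) = Circ" by blast
  define d where "d = (LEAST d. 1 \<le> d \<and> c ((i + d) mod N) = Circ)"
  have d1: "1 \<le> d" and dc: "c ((i + d) mod N) = Circ"
    using LeastI_ex[OF ex] by (auto simp: d_def)
  have dN: "d \<le> N" unfolding d_def by (rule Least_le) (rule exN)
  have between: "\<forall>j. 0 < j \<and> j < d \<longrightarrow> c ((i + j) mod N) = Bullet"
  proof (intro allI impI)
    fix j assume j: "0 < j \<and> j < d"
    hence "\<not> (1 \<le> j \<and> c ((i + j) mod N) = Circ)" using not_less_Least[of j] d_def by blast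
    thus "c ((i + j) mod N) = Bullet" using j by (cases "c ((i + j) mod N)") auto
  qed
  have "d - 1 \<le> 2" using ok iN ci' d1 dN dc between unfolding adjacent_circs_ok_def by blast
  moreover have "(x + d) mod N = (i + d) mod N" by (simp add: i_def mod_add_left_eq)
  ultimately show ?thesis using d1 dc by (intro exI[of _ d]) auto
qed

lemma fc: "f a = v \<Longrightarrow> a = b \<Longrightarrow> f b = v" by simp

lemma chain:
  fixes f :: "nat \<Rightarrow> symbol" and k s :: nat
  assumes per: "\<And>x. f (x + (2*k+2)) = f x"
    and nobbb: "\<And>x. f x = Circ \<or> f (x+1) = Circ \<or> f (x+2) = Circ"
    and nopat: "\<And>n. n \<ge> 1 \<Longrightarrow> 2*n+3 \<le> 2*k+2 \<Longrightarrow> \<not> (\<forall>j<2*n+3. f (s+j) = pattern n ! j)"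
    and b0: "f s = Bullet" and b1: "f (s+1) = Bullet"
  shows "\<exists>m. even m \<and> 2 \<le> m \<and> f (s+m) = Circ \<and> f (s+m+1) = Circ
      \<and> (\<forall>l. 1 \<le> l \<and> 2*l \<le> m \<longrightarrow> f (s+2*l) = Circ) \<and> m \<le> 2*k+2"
proof -
  let ?P = "\<lambda>m. even m \<and> 2 \<le> m \<and> f (s+m) = Circ \<and> f (s+m+1) = Circ \<and> (\<forall>l. 1 \<le> l \<and> 2*l \<le> m \<longrightarrow> f (s+2*l) = Circ)"
  have per0: "f (s + 2*(k+1)) = f s" by (rule fc[where f=f, OF per[of s]]) simp
  have per1: "f (s + 2*(k+1) + 1) = f (s+1)" by (rule fc[where f=f, OF per[of "s+1"]]) simp
  have claim: "(\<exists>m. ?P m \<and> m \<le> 2*i+2) \<or> ((\<forall>l. 1 \<le> l \<and> l \<le> i+1 \<longrightarrow> f (s+2*l) = Circ) \<and> (\<forall>l. 1 \<le> l \<and> l \<le> i \<longrightarrow> f (s+2*l+1) = Bullet))" for i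
  proof (induction i)
    case 0
    have "f (s+2) = Circ" using nobbb[of s] b0 b1 by auto
    have "\<forall>l. 1 \<le> l \<and> l \<le> 0+1 \<longrightarrow> f (s+2*l) = Circ"
    proof (intro allI impI)
      fix l :: nat assume "1 \<le> l \<and> l \<le> 0+1"
      then have "l = 1" by simp
      then show "f (s+2*l) = Circ" using \<open>f (s+2) = Circ\<close> by simp
    qed
    then show ?case by simp
  next
    case (Suc i)
    show ?case
    proof (cases "\<exists>m. ?P m \<and> m \<le> 2*i+2")
      case True
      then obtain m where "?P m" "m \<le> 2*i+2" by blast
      then have "?P m \<and> m \<le> 2*Suc i+2" by simp
      then show ?thesis by blast
    next
      case False
      with Suc.IH have ev: "\<forall>l. 1 \<le> l \<and> l \<le> i+1 \<longrightarrow> f (s+2*l) = Circ"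
        and od: "\<forall>l. 1 \<le> l \<and> l \<le> i \<longrightarrow> f (s+2*l+1) = Bullet" by auto
      have evi0: "f (s + 2*(i+1)) = Circ" using ev[rule_format, of "i+1"] by simp
      have evi: "f (s + (2*i+2)) = Circ" by (rule fc[where f=f, OF evi0]) simp
      show ?thesis
      proof (cases "f (s+2*i+3)")
        case Circ
        have c3: "f (s+(2*i+2)+1) = Circ"
        proof -
          have "f (s+(2*i+2)+1) = f (s+2*i+3)" by (rule arg_cong[where f=f]) simp
          then show ?thesis using Circ by simp
        qed
        have "\<forall>l. 1 \<le> l \<and> 2*l \<le> 2*i+2 \<longrightarrow> f (s+2*l) = Circ" using ev by auto
        then have "?P (2*i+2)" using evi c3 by simp
        then show ?thesis by (intro disjI1 exI[of _ "2*i+2"]) auto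
      next
        case Bullet
        note B3 = Bullet
        show ?thesis
        proof (cases "f (s+2*i+4)")
          case Circ
          have "\<forall>l. 1 \<le> l \<and> l \<le> Suc i+1 \<longrightarrow> f (s+2*l) = Circ"
          proof (intro allI impI)
            fix l assume l: "1 \<le> l \<and> l \<le> Suc i + 1"
            show "f (s+2*l) = Circ"
            proof (cases "l \<le> i+1")
              case True then show ?thesis using ev l by auto
            next
              case False then have "l = i+2" using l by auto
              then show ?thesis by - (rule fc[where f=f, OF Circ], simp)
            qed
          qed
          moreover have "\<forall>l. 1 \<le> l \<and> l \<le> Suc i \<longrightarrow> f (s+2*l+1) = Bullet"
          proof (intro allI impI)
            fix l assume l: "1 \<le> l \<and> l \<le> Suc i"
            show "f (s+2*l+1) = Bullet"
            proof (cases "l \<le> i")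
              case True then show ?thesis using od l by auto
            next
              case False then have "l = i+1" using l by auto
              then show ?thesis by - (rule fc[where f=f, OF B3], simp)
            qed
          qed
          ultimately show ?thesis by blast
        next
          case Bullet
          note B4 = Bullet
          show ?thesis
          proof (cases "2*(i+1)+3 \<le> 2*k+2")
            case True
            have "\<forall>j<2*(i+1)+3. f (s+j) = pattern (i+1) ! j"
            proof (intro allI impI)
              fix j assume j: "j < 2*(i+1)+3"
              show "f (s+j) = pattern (i+1) ! j"
              proof (cases "j < 2")
                case True
                then have "j = 0 \<or> j = 1" by auto
                then show ?thesis using b0 b1 j by (auto simp: pattern_nth)
              next
                case j2: False
                show ?thesis
                proof (cases "j < 2*(i+1)+2")
                  case jl: True
                  show ?thesis
                  proof (cases "even j")
                    case True
                    then obtain l where l: "j = 2*l" by (auto elim: evenE)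
                    then have "1 \<le> l \<and> l \<le> i+1" using j2 jl by auto
                    then have "f (s+j) = Circ" using ev l by auto
                    then show ?thesis using j j2 jl True by (simp add: pattern_nth)
                  next
                    case False
                    then obtain l where l: "j = 2*l+1" by (auto elim: oddE)
                    then have l1: "1 \<le> l \<and> l \<le> i+1" using j2 jl by auto
                    have "f (s+j) = Bullet"
                    proof (cases "l \<le> i")
                      case True then show ?thesis using od l l1 by auto
                    next
                      case False then have "l = i+1" using l1 by auto
                      then show ?thesis using l by - (rule fc[where f=f, OF B3], simp)
                    qed
                    then show ?thesis using j j2 jl False by (simp add: pattern_nth)
                  qed
                next
                  case False
                  then have "j = 2*i+4" using j by auto
                  then have fb: "f (s+j) = Bullet" by - (rule fc[where f=f, OF B4], simp)
                  show ?thesis using j fb \<open>j = 2*i+4\<close> by (simp add: pattern_nth)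
                qed
              qed
            qed
            with nopat[of "i+1"] True show ?thesis by simp
          next
            case False
            then have ik: "k \<le> i+1" by arith
            show ?thesis
            proof (cases "i+1 = k")
              case True
              have "f (s+2*i+3) = Bullet" by (rule B3)
              moreover have "f (s+2*i+3+1) = Bullet" using True by - (rule fc[where f=f, OF per0[unfolded b0]], simp)
              moreover have "f (s+2*i+3+2) = Bullet" using True by - (rule fc[where f=f, OF per1[unfolded b1]], simp)
              ultimately show ?thesis using nobbb[of "s+2*i+3"] by auto
            next
              case False
              then have "k+1 \<le> i+1" using ik by auto
              then have "f (s + 2*(k+1)) = Circ" using ev by auto
              then show ?thesis using per0 b0 by auto
            qed
          qed
        qed
      qed
    qed
  qed
  from claim[of k] show ?thesis
  proof
    assume "\<exists>m. ?P m \<and> m \<le> 2*k+2"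
    then show ?thesis by blast
  next
    assume "(\<forall>l. 1 \<le> l \<and> l \<le> k+1 \<longrightarrow> f (s+2*l) = Circ) \<and> (\<forall>l. 1 \<le> l \<and> l \<le> k \<longrightarrow> f (s+2*l+1) = Bullet)"
    then have "f (s + 2*(k+1)) = Circ" by auto
    then show ?thesis using per0 b0 by auto
  qed
qed

lemma notC[simp]: "x \<noteq> Circ \<longleftrightarrow> x = Bullet" by (cases x) auto
lemma notB[simp]: "x \<noteq> Bullet \<longleftrightarrow> x = Circ" by (cases x) auto

theorem mainTheorem4:
  fixes k :: nat and c :: "nat \<Rightarrow> symbol"
  assumes "k \<ge> 1"
    and "card {i. i < 2*k+2 \<and> c i = Circ} = k"
    and "card {i. i < 2*k+2 \<and> c i = Bullet} = k + 2"
    and "adjacent_circs_ok (2*k+2) c"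
  shows "\<exists>n\<ge>1. occurs_cyclically (2*k+2) c (pattern n)"
proof (rule ccontr)
  assume nop: "\<not> (\<exists>n\<ge>1. occurs_cyclically (2*k+2) c (pattern n))"
  define N where "N = 2*k+2"
  have N0: "0 < N" by (simp add: N_def)
  define f where "f x = c (x mod N)" for x
  have per: "f (x + (2*k+2)) = f x" for x unfolding f_def N_def by (metis mod_add_self2)
  have fmod: "f (x mod N) = f x" for x by (simp add: f_def)
  have fmod1: "f (x mod N + 1) = f (x + 1)" for x unfolding f_def by (simp add: mod_Suc_eq)
  have ok: "adjacent_circs_ok N c" using assms(4) by (simp add: N_def)
  have "{i. i < 2*k+2 \<and> c i = Circ} \<noteq> {}"
  proof
    assume "{i. i < 2*k+2 \<and> c i = Circ} = {}"
    then have "k = 0" using assms(2) by (metis card.empty)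
    then show False using assms(1) by simp
  qed
  then obtain p where p: "p < N" "c p = Circ" by (auto simp: N_def)
  have nextc: "f x = Circ \<Longrightarrow> \<exists>d. 1 \<le> d \<and> d \<le> 3 \<and> f (x+d) = Circ" for x
    using next_circ[OF ok N0, of x] by (simp add: f_def)
  have cover: "\<exists>e. t \<le> e \<and> e \<le> t+2 \<and> f (p+e) = Circ" for t
  proof (induction t)
    case 0 show ?case using p by (intro exI[of _ 0]) (simp add: f_def)
  next
    case (Suc t)
    then obtain e where e: "t \<le> e" "e \<le> t+2" "f (p+e) = Circ" by blast
    show ?case
    proof (cases "e = t")
      case False then show ?thesis using e by (intro exI[of _ e]) auto
    next
      case True
      obtain d where d: "1 \<le> d" "d \<le> 3" "f (p+e+d) = Circ" using nextc[OF e(3)] by blast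
      show ?thesis using d True by (intro exI[of _ "e+d"]) (auto simp: add.assoc)
    qed
  qed
  have nobbb: "f x = Circ \<or> f (x+1) = Circ \<or> f (x+2) = Circ" for x
  proof -
    obtain e where e: "x + N - p \<le> e" "e \<le> x + N - p + 2" "f (p+e) = Circ"
      using cover[of "x+N-p"] by blast
    define j where "j = e - (x + N - p)"
    have j2: "j \<le> 2" using e by (simp add: j_def)
    have pe: "p + e = x + j + (2*k+2)" using e p by (simp add: j_def N_def)
    have "f (x+j) = Circ" using e(3) per[of "x+j"] unfolding pe by simp
    moreover have "j = 0 \<or> j = 1 \<or> j = 2" using j2 by auto
    ultimately show ?thesis by auto
  qed
  have nopat: "\<not> (\<forall>j<2*n+3. f (s+j) = pattern n ! j)"
    if "s < N" "n \<ge> 1" "2*n+3 \<le> 2*k+2" for s n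
  proof
    assume all: "\<forall>j<2*n+3. f (s+j) = pattern n ! j"
    have "occurs_cyclically (2*k+2) c (pattern n)"
      unfolding occurs_cyclically_def length_pattern
      using that all by (auto simp: f_def N_def intro!: exI[of _ s])
    then show False using nop that by blast
  qed
  define Q where "Q s m \<longleftrightarrow> even m \<and> 2 \<le> m \<and> f (s+m) = Circ \<and> f (s+m+1) = Circ
      \<and> (\<forall>l. 1 \<le> l \<and> 2*l \<le> m \<longrightarrow> f (s+2*l) = Circ) \<and> m \<le> 2*k+2" for s m
  have chainQ: "\<exists>m. Q s m" if "s < N" "f s = Bullet" "f (s+1) = Bullet" for s
    unfolding Q_def by (rule chain[OF per nobbb nopat[OF that(1)] that(2,3)])
  define BB where "BB = {s. s < N \<and> f s = Bullet \<and> f (s+1) = Bullet}"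
  define CC where "CC = {s. s < N \<and> f s = Circ \<and> f (s+1) = Circ}"
  define BC where "BC = {s. s < N \<and> f s = Bullet \<and> f (s+1) = Circ}"
  define AB where "AB = {s. s < N \<and> f s = Bullet}"
  define AC where "AC = {s. s < N \<and> f s = Circ}"
  define TC where "TC = {s. s < N \<and> f (s+1) = Circ}"
  define mm where "mm s = (SOME m. Q s m)" for s
  define g where "g s = (s + mm s) mod N" for s
  have Qm: "Q s (mm s)" if "s \<in> BB" for s
    using chainQ[of s] that unfolding BB_def mm_def by (auto intro: someI_ex)
  have gmap: "g ` BB \<subseteq> CC"
  proof
    fix t assume "t \<in> g ` BB"
    then obtain s where s: "s \<in> BB" "t = g s" by blast
    have "Q s (mm s)" by (rule Qm[OF s(1)])
    then show "t \<in> CC" unfolding CC_def s(2) g_def Q_def using N0 fmod fmod1 by simp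
  qed
  have key: False if "s1 \<in> BB" "s2 \<in> BB" "mm s1 < mm s2" "(s1 + mm s1) mod N = (s2 + mm s2) mod N" for s1 s2
  proof -
    have q1: "Q s1 (mm s1)" and q2: "Q s2 (mm s2)" using Qm that by auto
    have "even (mm s2 - mm s1)" using q1 q2 that(3) unfolding Q_def by auto
    then obtain l where l: "mm s2 - mm s1 = 2*l" by (elim evenE) blast
    have l1: "1 \<le> l" "2*l \<le> mm s2" using l that(3) by auto
    have fl: "f (s2 + 2*l) = Circ" using q2 l1 unfolding Q_def by auto
    have "s2 + 2*l + mm s1 = s2 + mm s2" using l that(3) by simp
    then have "(s2 + 2*l + mm s1) mod N = (s1 + mm s1) mod N"
      using that(4) by metis
    then have "(s2 + 2*l) mod N = s1 mod N" by (rule modcancel)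
    then have "f (s2 + 2*l) = f s1" by (metis fmod)
    then show False using fl that(1) unfolding BB_def by simp
  qed
  have inj: "inj_on g BB"
  proof (rule inj_onI)
    fix s1 s2 assume a: "s1 \<in> BB" "s2 \<in> BB" "g s1 = g s2"
    have e: "(s1 + mm s1) mod N = (s2 + mm s2) mod N" using a(3) by (simp add: g_def)
    consider "mm s1 < mm s2" | "mm s2 < mm s1" | "mm s1 = mm s2" by linarith
    then show "s1 = s2"
    proof cases
      case 1 then show ?thesis using key[OF a(1,2) 1 e] by blast
    next
      case 2 then show ?thesis using key[OF a(2,1) 2 e[symmetric]] by blast
    next
      case 3
      then have "s1 mod N = s2 mod N" using e modcancel by metis
      then show ?thesis using a(1,2) unfolding BB_def by simp
    qed
  qed
  have finCC: "finite CC" unfolding CC_def by simp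
  have le: "card BB \<le> card CC" by (rule card_inj_on_le[OF inj gmap finCC])
  have cAB: "card AB = k+2"
  proof -
    have "AB = {i. i < 2*k+2 \<and> c i = Bullet}" unfolding AB_def f_def N_def by auto
    then show ?thesis using assms(3) by simp
  qed
  have cAC: "card AC = k"
  proof -
    have "AC = {i. i < 2*k+2 \<and> c i = Circ}" unfolding AC_def f_def N_def by auto
    then show ?thesis using assms(2) by simp
  qed
  have "AB = BB \<union> BC" "BB \<inter> BC = {}" unfolding AB_def BB_def BC_def by auto
  then have s1: "card AB = card BB + card BC"
    by (simp add: card_Un_disjoint BB_def BC_def)
  have "TC = CC \<union> BC" "CC \<inter> BC = {}" unfolding TC_def CC_def BC_def by auto
  then have s2: "card TC = card CC + card BC"
    by (simp add: card_Un_disjoint CC_def BC_def)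
  define h where "h i = (i + 1) mod N" for i
  have injh: "inj_on h TC"
  proof (rule inj_onI)
    fix i j assume a: "i \<in> TC" "j \<in> TC" "h i = h j"
    then have "i mod N = j mod N" unfolding h_def using modcancel by blast
    then show "i = j" using a(1,2) unfolding TC_def by simp
  qed
  have imh: "h ` TC = AC"
  proof
    show "h ` TC \<subseteq> AC" unfolding TC_def AC_def h_def using N0 fmod by auto
  next
    show "AC \<subseteq> h ` TC"
    proof
      fix t assume t: "t \<in> AC"
      define i where "i = (t + N - 1) mod N"
      have hi: "h i = t"
      proof -
        have "h i = (t + N - 1 + 1) mod N" unfolding h_def i_def by (simp add: mod_Suc_eq)
        also have "\<dots> = t" using N0 t unfolding AC_def by simp
        finally show ?thesis .
      qed
      have fh: "f (h i) = f (i + 1)" unfolding h_def by (rule fmod)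
      have "f (i + 1) = Circ" using hi t fh unfolding AC_def by simp
      then have "i \<in> TC" unfolding TC_def i_def using N0 by simp
      then show "t \<in> h ` TC" using hi by blast
    qed
  qed
  have "card TC = card AC" using card_image[OF injh] imh by simp
  with s1 s2 cAB cAC le show False by linarith
qed

end
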